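(* Consider a finite discounted MDP with rewards in $[0,1]$ and an initial state distribution $\mu$ with $\min_s\mu(s)>0$, and run the on-policy stochastic natural policy gradient algorithm described in the context with constant learning rate $\eta>0$. Then for all $t\ge1$: $V^{\pi_{\theta_{t+1}}}(s_0) - V^{\pi_{\theta_t}}(s_0)\ge 0$ almost surely for every $s_0\in\mathcal{S}$, and $$\mathbb{E}_t\left[V^{\pi_{\theta_{t+1}}}(\mu)\right] - V^{\pi_{\theta_t}}(\mu) \ge \frac{\eta(1-\gamma)^4\min_s\mu(s)}{1+\eta}\cdot\left\|\frac{d_\mu^{\pi^*}}{\mu}\right\|_\infty^{-1}\cdot\frac{\min_s\pi_{\theta_t}(a^*(s)\mid s)^2}{S}\cdot\left(V^{\pi^*}(\mu) - V^{\pi_{\theta_t}}(\mu)\right)^2,$$ where $\mathbb{E}_t$ is over the sampling $s_t\sim d_\mu^{\pi_{\theta_t}}(\cdot)$ and $a_t\sim\pi_{\theta_t}(\cdot\mid s_t)$ given $\theta_t$.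
   Context: A finite MDP is $(\mathcal{S},\mathcal{A},r,\mathcal{P},\gamma)$ with finite state and action sets, $S:=|\mathcal{S}|$, $r:\mathcal{S}\times\mathcal{A}\to[0,1]$, transition kernel $\mathcal{P}$, $\gamma\in[0,1)$. Softmax policy $\pi_\theta(a\mid s) = e^{\theta(s,a)}/\sum_{a'}e^{\theta(s,a')}$. $V^\pi(s) = \mathbb{E}[\sum_{t\ge0}\gamma^t r(s_t,a_t)\mid s_0=s]$, $Q^\pi(s,a) = r(s,a)+\gamma\sum_{s'}\mathcal{P}(s'\mid s,a)V^\pi(s')$, $V^\pi(\mu) = \mathbb{E}_{s\sim\mu}V^\pi(s)$, $d_\mu^\pi(s) = \mathbb{E}_{s_0\sim\mu}[(1-\gamma)\sum_{t\ge0}\gamma^t\Pr(s_t=s\mid s_0,\pi,\mathcal{P})]$. $\pi^*$ is an optimal deterministic policy with action $a^*(s)$ in state $s$. $\left\|\frac{d_\mu^{\pi^*}}{\mu}\right\|_\infty := \max_s d_\mu^{\pi^*}(s)/\mu(s)$. Algorithm: at iteration $t$, sample $s_t\sim d_\mu^{\pi_{\theta_t}}(\cdot)$, $a_t\sim\pi_{\theta_t}(\cdot\mid s_t)$, set $\theta_{t+1}(s_t,a_t) = \theta_t(s_t,a_t)+\eta\frac{Q^{\pi_{\theta_t}}(s_t,a_t)-V^{\pi_{\theta_t}}(s_t)}{\pi_{\theta_t}(a_t\mid s_t)}$, other coordinates unchanged. *)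

theory Defs
  imports "HOL-Analysis.Analysis"
begin

text \<open>Finite MDP: states 's, actions 'a (finite types); transition kernel
  P s a s' = Pr(s' | s, a); reward r s a; discount g.  A (stochastic) policy is
  pol s a = pi(a | s).\<close>

definition is_policy :: "('s::finite \<Rightarrow> 'a::finite \<Rightarrow> real) \<Rightarrow> bool" where
  "is_policy pol \<longleftrightarrow> (\<forall>s a. 0 \<le> pol s a) \<and> (\<forall>s. (\<Sum>a\<in>UNIV. pol s a) = 1)"

definition det_policy :: "('s \<Rightarrow> 'a) \<Rightarrow> 's \<Rightarrow> 'a \<Rightarrow> real" where
  "det_policy astar s b = (if b = astar s then 1 else 0)"

definition softmax :: "('s \<Rightarrow> 'a::finite \<Rightarrow> real) \<Rightarrow> 's \<Rightarrow> 'a \<Rightarrow> real" where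
  "softmax \<theta> s a = exp (\<theta> s a) / (\<Sum>a'\<in>UNIV. exp (\<theta> s a'))"

definition ppol :: "('s::finite \<Rightarrow> 'a::finite \<Rightarrow> 's \<Rightarrow> real) \<Rightarrow> ('s \<Rightarrow> 'a \<Rightarrow> real) \<Rightarrow> 's \<Rightarrow> 's \<Rightarrow> real" where
  "ppol P pol s s' = (\<Sum>a\<in>UNIV. pol s a * P s a s')"

text \<open>Pn P pol n s s' = Pr(s_n = s' | s_0 = s, pol, P).\<close>
fun Pn :: "('s::finite \<Rightarrow> 'a::finite \<Rightarrow> 's \<Rightarrow> real) \<Rightarrow> ('s \<Rightarrow> 'a \<Rightarrow> real) \<Rightarrow> nat \<Rightarrow> 's \<Rightarrow> 's \<Rightarrow> real" where
  "Pn P pol 0 s s' = (if s = s' then 1 else 0)"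
| "Pn P pol (Suc n) s s' = (\<Sum>u\<in>UNIV. Pn P pol n s u * ppol P pol u s')"

definition rpol :: "('s \<Rightarrow> 'a::finite \<Rightarrow> real) \<Rightarrow> ('s \<Rightarrow> 'a \<Rightarrow> real) \<Rightarrow> 's \<Rightarrow> real" where
  "rpol r pol s = (\<Sum>a\<in>UNIV. pol s a * r s a)"

definition V :: "('s::finite \<Rightarrow> 'a::finite \<Rightarrow> 's \<Rightarrow> real) \<Rightarrow> ('s \<Rightarrow> 'a \<Rightarrow> real) \<Rightarrow> real
    \<Rightarrow> ('s \<Rightarrow> 'a \<Rightarrow> real) \<Rightarrow> 's \<Rightarrow> real" where
  "V P r g pol s = (\<Sum>t. g ^ t * (\<Sum>s'\<in>UNIV. Pn P pol t s s' * rpol r pol s'))"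

definition Vmu :: "('s::finite \<Rightarrow> 'a::finite \<Rightarrow> 's \<Rightarrow> real) \<Rightarrow> ('s \<Rightarrow> 'a \<Rightarrow> real) \<Rightarrow> real
    \<Rightarrow> ('s \<Rightarrow> 'a \<Rightarrow> real) \<Rightarrow> ('s \<Rightarrow> real) \<Rightarrow> real" where
  "Vmu P r g pol \<mu> = (\<Sum>s\<in>UNIV. \<mu> s * V P r g pol s)"

definition Q :: "('s::finite \<Rightarrow> 'a::finite \<Rightarrow> 's \<Rightarrow> real) \<Rightarrow> ('s \<Rightarrow> 'a \<Rightarrow> real) \<Rightarrow> real
    \<Rightarrow> ('s \<Rightarrow> 'a \<Rightarrow> real) \<Rightarrow> 's \<Rightarrow> 'a \<Rightarrow> real" where
  "Q P r g pol s a = r s a + g * (\<Sum>s'\<in>UNIV. P s a s' * V P r g pol s')"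

definition dmu :: "('s::finite \<Rightarrow> 'a::finite \<Rightarrow> 's \<Rightarrow> real) \<Rightarrow> real
    \<Rightarrow> ('s \<Rightarrow> 'a \<Rightarrow> real) \<Rightarrow> ('s \<Rightarrow> real) \<Rightarrow> 's \<Rightarrow> real" where
  "dmu P g pol \<mu> s = (\<Sum>s0\<in>UNIV. \<mu> s0 * ((1 - g) * (\<Sum>t. g ^ t * Pn P pol t s0 s)))"

definition npg_update :: "('s::finite \<Rightarrow> 'a::finite \<Rightarrow> 's \<Rightarrow> real) \<Rightarrow> ('s \<Rightarrow> 'a \<Rightarrow> real) \<Rightarrow> real
    \<Rightarrow> real \<Rightarrow> ('s \<Rightarrow> 'a \<Rightarrow> real) \<Rightarrow> 's \<Rightarrow> 'a \<Rightarrow> ('s \<Rightarrow> 'a \<Rightarrow> real)" where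
  "npg_update P r g \<eta> \<theta> s a =
     \<theta>(s := (\<theta> s)(a := \<theta> s a + \<eta> *
        (Q P r g (softmax \<theta>) s a - V P r g (softmax \<theta>) s) / softmax \<theta> s a))"

end

theory Submission
  imports Defs
begin


lemma swap_UNIV: "(\<Sum>i\<in>(UNIV::'i::finite set). \<Sum>j\<in>(UNIV::'j::finite set). f i j) = (\<Sum>j\<in>UNIV. \<Sum>i\<in>UNIV. f i j)"
  by (rule sum.swap)

locale mdp =
  fixes P :: "'s::finite \<Rightarrow> 'a::finite \<Rightarrow> 's \<Rightarrow> real"
    and r :: "'s \<Rightarrow> 'a \<Rightarrow> real"
    and g :: real
  assumes r_range: "\<And>s a. 0 \<le> r s a \<and> r s a \<le> 1"
    and P_nonneg: "\<And>s a s'. 0 \<le> P s a s'"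
    and P_sum: "\<And>s a. (\<Sum>s'\<in>UNIV. P s a s') = 1"
    and g0: "0 \<le> g" and g1: "g < 1"
begin

lemma ppol_nonneg: "is_policy pol \<Longrightarrow> 0 \<le> ppol P pol s s'"
  unfolding ppol_def is_policy_def by (auto intro!: sum_nonneg simp: P_nonneg)

lemma ppol_sum: "is_policy pol \<Longrightarrow> (\<Sum>s'\<in>UNIV. ppol P pol s s') = 1"
proof -
  assume "is_policy pol"
  have "(\<Sum>s'\<in>UNIV. ppol P pol s s') = (\<Sum>s'\<in>UNIV. \<Sum>a\<in>UNIV. pol s a * P s a s')"
    unfolding ppol_def by simp
  also have "\<dots> = (\<Sum>a\<in>UNIV. \<Sum>s'\<in>UNIV. pol s a * P s a s')" by (rule swap_UNIV)
  also have "\<dots> = (\<Sum>a\<in>UNIV. pol s a * (\<Sum>s'\<in>UNIV. P s a s'))"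
    by (simp add: sum_distrib_left)
  also have "\<dots> = 1" using \<open>is_policy pol\<close> by (simp add: P_sum is_policy_def)
  finally show ?thesis .
qed

lemma Pn_nonneg: "is_policy pol \<Longrightarrow> 0 \<le> Pn P pol n s s'"
  by (induction n arbitrary: s') (auto intro!: sum_nonneg mult_nonneg_nonneg ppol_nonneg)

lemma Pn_sum: "is_policy pol \<Longrightarrow> (\<Sum>s'\<in>UNIV. Pn P pol n s s') = 1"
proof (induction n)
  case 0
  then show ?case by simp
next
  case (Suc n)
  have "(\<Sum>s'\<in>UNIV. Pn P pol (Suc n) s s') = (\<Sum>s'\<in>UNIV. \<Sum>u\<in>UNIV. Pn P pol n s u * ppol P pol u s')"
    by simp
  also have "\<dots> = (\<Sum>u\<in>UNIV. \<Sum>s'\<in>UNIV. Pn P pol n s u * ppol P pol u s')" by (rule swap_UNIV)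
  also have "\<dots> = (\<Sum>u\<in>UNIV. Pn P pol n s u * (\<Sum>s'\<in>UNIV. ppol P pol u s'))"
    by (simp add: sum_distrib_left)
  also have "\<dots> = 1" using Suc by (simp add: ppol_sum)
  finally show ?case .
qed

lemma Pn_Suc': "Pn P pol (Suc n) s s' = (\<Sum>u\<in>UNIV. ppol P pol s u * Pn P pol n u s')"
proof (induction n arbitrary: s s')
  case 0
  have e1: "\<And>u. (if s = u then 1 else 0) * ppol P pol u s' = (if u = s then ppol P pol s s' else 0)" by auto
  have e2: "\<And>u. ppol P pol s u * (if u = s' then 1 else 0) = (if u = s' then ppol P pol s s' else 0)" by auto
  show ?case by (simp only: Pn.simps e1 e2 sum.delta) simp
next
  case (Suc n)
  have "Pn P pol (Suc (Suc n)) s s' = (\<Sum>v\<in>UNIV. (\<Sum>u\<in>UNIV. ppol P pol s u * Pn P pol n u v) * ppol P pol v s')"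
    by (simp only: Pn.simps(2)[of P pol "Suc n"] Suc)
  also have "\<dots> = (\<Sum>v\<in>UNIV. \<Sum>u\<in>UNIV. ppol P pol s u * (Pn P pol n u v * ppol P pol v s'))"
    by (simp add: sum_distrib_right mult.assoc)
  also have "\<dots> = (\<Sum>u\<in>UNIV. \<Sum>v\<in>UNIV. ppol P pol s u * (Pn P pol n u v * ppol P pol v s'))"
    by (rule swap_UNIV)
  also have "\<dots> = (\<Sum>u\<in>UNIV. ppol P pol s u * (\<Sum>v\<in>UNIV. Pn P pol n u v * ppol P pol v s'))"
    by (simp add: sum_distrib_left)
  finally show ?case by (simp only: Pn.simps(2)[of P pol n])
qed

lemma rpol_bounds: "is_policy pol \<Longrightarrow> 0 \<le> rpol r pol s \<and> rpol r pol s \<le> 1"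
proof -
  assume p: "is_policy pol"
  have "rpol r pol s \<le> (\<Sum>a\<in>UNIV. pol s a * 1)" unfolding rpol_def
    using p r_range by (intro sum_mono mult_left_mono) (auto simp: is_policy_def)
  moreover have "0 \<le> rpol r pol s" unfolding rpol_def
    using p r_range by (intro sum_nonneg mult_nonneg_nonneg) (auto simp: is_policy_def)
  ultimately show ?thesis using p by (simp add: is_policy_def)
qed

lemma Pn_avg_bound:
  assumes "is_policy pol" "\<And>u. \<bar>f u\<bar> \<le> B"
  shows "\<bar>\<Sum>u\<in>UNIV. Pn P pol n s u * f u\<bar> \<le> B"
proof -
  have "\<bar>\<Sum>u\<in>UNIV. Pn P pol n s u * f u\<bar> \<le> (\<Sum>u\<in>UNIV. \<bar>Pn P pol n s u * f u\<bar>)"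
    by (rule sum_abs)
  also have "\<dots> \<le> (\<Sum>u\<in>UNIV. Pn P pol n s u * B)"
    using assms Pn_nonneg by (intro sum_mono) (simp add: abs_mult mult_left_mono)
  also have "\<dots> = B" using assms by (simp add: Pn_sum sum_distrib_right[symmetric])
  finally show ?thesis .
qed

definition ft where "ft pol t s = (\<Sum>s'\<in>UNIV. Pn P pol t s s' * rpol r pol s')"

lemma ft_bound: "is_policy pol \<Longrightarrow> \<bar>ft pol t s\<bar> \<le> 1"
  unfolding ft_def using rpol_bounds by (intro Pn_avg_bound) auto

lemma ft_Suc: "ft pol (Suc t) s = (\<Sum>u\<in>UNIV. ppol P pol s u * ft pol t u)"
proof -
  have "ft pol (Suc t) s = (\<Sum>s'\<in>UNIV. \<Sum>u\<in>UNIV. ppol P pol s u * (Pn P pol t u s' * rpol r pol s'))"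
    unfolding ft_def Pn_Suc' by (simp add: sum_distrib_right mult.assoc)
  also have "\<dots> = (\<Sum>u\<in>UNIV. \<Sum>s'\<in>UNIV. ppol P pol s u * (Pn P pol t u s' * rpol r pol s'))"
    by (rule swap_UNIV)
  finally show ?thesis unfolding ft_def by (simp add: sum_distrib_left)
qed

lemma ft_sums: "is_policy pol \<Longrightarrow> (\<lambda>t. g ^ t * ft pol t s) sums V P r g pol s"
proof -
  assume p: "is_policy pol"
  have "summable (\<lambda>t. g ^ t * ft pol t s)"
  proof (rule summable_comparison_test[OF _ summable_geometric[of g]])
    show "\<exists>N. \<forall>n\<ge>N. norm (g ^ n * ft pol n s) \<le> g ^ n"
      using ft_bound[OF p] g0 by (auto simp: abs_mult intro!: mult_left_le)
  next show "norm g < 1" using g0 g1 by simp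
  qed
  then show ?thesis unfolding V_def ft_def[symmetric] by (simp add: summable_sums)
qed

lemma bellman: "is_policy pol \<Longrightarrow> V P r g pol s = rpol r pol s + g * (\<Sum>u\<in>UNIV. ppol P pol s u * V P r g pol u)"
proof -
  assume p: "is_policy pol"
  define X where "X = (\<Sum>u\<in>UNIV. g * ppol P pol s u * V P r g pol u)"
  have "(\<lambda>t. \<Sum>u\<in>UNIV. g * ppol P pol s u * (g ^ t * ft pol t u)) sums X"
    unfolding X_def by (intro sums_sum sums_mult ft_sums p)
  moreover have "(\<lambda>t. \<Sum>u\<in>UNIV. g * ppol P pol s u * (g ^ t * ft pol t u)) = (\<lambda>t. (\<lambda>t. g ^ t * ft pol t s) (Suc t))"
  proof (rule ext)
    fix t
    have "g ^ Suc t * ft pol (Suc t) s = (\<Sum>u\<in>UNIV. g ^ Suc t * (ppol P pol s u * ft pol t u))"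
      by (simp only: ft_Suc sum_distrib_left)
    also have "\<dots> = (\<Sum>u\<in>UNIV. g * ppol P pol s u * (g ^ t * ft pol t u))"
      by (rule sum.cong) (simp_all only: power_Suc mult_ac)
    finally show "(\<Sum>u\<in>UNIV. g * ppol P pol s u * (g ^ t * ft pol t u)) = (\<lambda>t. g ^ t * ft pol t s) (Suc t)"
      by simp
  qed
  ultimately have "(\<lambda>t. (\<lambda>t. g ^ t * ft pol t s) (Suc t)) sums X" by simp
  from sums_Suc_iff[THEN iffD1, OF this]
  have "(\<lambda>t. g ^ t * ft pol t s) sums (X + g ^ 0 * ft pol 0 s)" .
  then have "V P r g pol s = X + g ^ 0 * ft pol 0 s"
    using ft_sums[OF p] sums_unique2 by blast
  moreover have "ft pol 0 s = rpol r pol s"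
  proof -
    have e: "\<And>u. (if s = u then 1 else 0) * rpol r pol u = (if u = s then rpol r pol s else 0)" by auto
    show ?thesis unfolding ft_def by (simp only: Pn.simps e sum.delta) simp
  qed
  ultimately show ?thesis unfolding X_def by (simp add: sum_distrib_left mult.assoc)
qed


lemma Qavg: "(\<Sum>b\<in>UNIV. pol' u b * Q P r g pol u b) = rpol r pol' u + g * (\<Sum>w\<in>UNIV. ppol P pol' u w * V P r g pol w)"
proof -
  have "(\<Sum>b\<in>UNIV. pol' u b * Q P r g pol u b) = rpol r pol' u + g * (\<Sum>b\<in>UNIV. \<Sum>w\<in>UNIV. pol' u b * P u b w * V P r g pol w)"
    unfolding Q_def rpol_def by (simp add: distrib_left sum.distrib sum_distrib_left mult_ac)
  also have "(\<Sum>b\<in>UNIV. \<Sum>w\<in>UNIV. pol' u b * P u b w * V P r g pol w) = (\<Sum>w\<in>UNIV. \<Sum>b\<in>UNIV. pol' u b * P u b w * V P r g pol w)"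
    by (rule swap_UNIV)
  also have "\<dots> = (\<Sum>w\<in>UNIV. ppol P pol' u w * V P r g pol w)"
    unfolding ppol_def by (simp add: sum_distrib_right)
  finally show ?thesis .
qed

lemma Qavg_self: "is_policy pol \<Longrightarrow> (\<Sum>b\<in>UNIV. pol u b * Q P r g pol u b) = V P r g pol u"
  using Qavg[of pol u pol] bellman[of pol u] by simp

lemma diff_eq:
  assumes "is_policy pol" "is_policy pol'"
  shows "V P r g pol' u - V P r g pol u = ((\<Sum>b\<in>UNIV. pol' u b * Q P r g pol u b) - V P r g pol u)
     + g * (\<Sum>w\<in>UNIV. ppol P pol' u w * (V P r g pol' w - V P r g pol w))"
  using bellman[OF assms(2), of u] Qavg[of pol' u pol]
  by (simp add: right_diff_distrib sum_subtractf algebra_simps)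

lemma nonneg_fix:
  assumes p: "is_policy pol" and eq: "\<And>u. D u = \<delta> u + g * (\<Sum>w\<in>UNIV. ppol P pol u w * D w)"
    and dn: "\<And>u. 0 \<le> \<delta> u"
  shows "0 \<le> D u"
proof -
  define m where "m = Min (range D)"
  have "m \<in> range D" unfolding m_def by (rule Min_in) auto
  then obtain u0 where u0: "D u0 = m" by auto
  have mle: "\<And>w. m \<le> D w" unfolding m_def by (rule Min_le) auto
  have "m = (\<Sum>w\<in>UNIV. ppol P pol u0 w * m)" using ppol_sum[OF p] by (simp add: sum_distrib_right[symmetric])
  also have "\<dots> \<le> (\<Sum>w\<in>UNIV. ppol P pol u0 w * D w)"
    using mle ppol_nonneg[OF p] by (intro sum_mono mult_left_mono) auto
  finally have "g * m \<le> g * (\<Sum>w\<in>UNIV. ppol P pol u0 w * D w)" using g0 by (rule mult_left_mono)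
  then have "g * m \<le> m" using eq[of u0] dn[of u0] u0 by linarith
  then have "0 \<le> (1 - g) * m" by (simp add: algebra_simps)
  then have "0 \<le> m" using g1 by (simp add: zero_le_mult_iff)
  then show ?thesis using mle[of u] by linarith
qed

lemma V_nonneg: "is_policy pol \<Longrightarrow> 0 \<le> V P r g pol s"
proof -
  assume p: "is_policy pol"
  show ?thesis
    by (rule nonneg_fix[OF p, where \<delta> = "rpol r pol" and D = "V P r g pol"]) (rule bellman[OF p], use rpol_bounds[OF p] in blast)
qed

lemma V_le: "is_policy pol \<Longrightarrow> V P r g pol s \<le> 1 / (1 - g)"
proof -
  assume p: "is_policy pol"
  define c where "c = 1 / (1 - g)"
  have cg: "c = 1 + g * c" unfolding c_def using g1 by (simp add: field_simps)
  have "0 \<le> c - V P r g pol s"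
  proof (rule nonneg_fix[OF p, where \<delta> = "\<lambda>u. 1 - rpol r pol u"])
    fix u
    have A: "(\<Sum>w\<in>UNIV. ppol P pol u w * (c - V P r g pol w)) = c - (\<Sum>w\<in>UNIV. ppol P pol u w * V P r g pol w)"
      unfolding right_diff_distrib sum_subtractf sum_distrib_right[symmetric] ppol_sum[OF p] by simp
    have B: "V P r g pol u = rpol r pol u + g * (\<Sum>w\<in>UNIV. ppol P pol u w * V P r g pol w)"
      by (rule bellman[OF p])
    show "c - V P r g pol u = 1 - rpol r pol u + g * (\<Sum>w\<in>UNIV. ppol P pol u w * (c - V P r g pol w))"
      using B cg right_diff_distrib[of g c "\<Sum>w\<in>UNIV. ppol P pol u w * V P r g pol w"] unfolding A by linarith
  next
    fix u show "0 \<le> 1 - rpol r pol u" using rpol_bounds[OF p] by simp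
  qed
  then show ?thesis unfolding c_def by simp
qed

lemma expansion:
  assumes p: "is_policy pol" and eq: "\<And>u. D u = \<delta> u + g * (\<Sum>w\<in>UNIV. ppol P pol u w * D w)"
  shows "(\<lambda>t. g ^ t * (\<Sum>u\<in>UNIV. Pn P pol t s u * \<delta> u)) sums D s"
proof -
  have part: "D s = (\<Sum>t<n. g ^ t * (\<Sum>u\<in>UNIV. Pn P pol t s u * \<delta> u)) + g ^ n * (\<Sum>u\<in>UNIV. Pn P pol n s u * D u)" for n
  proof (induction n)
    case 0
    have e: "\<And>u. (if s = u then 1 else 0) * D u = (if u = s then D s else 0)" by auto
    show ?case by (simp only: Pn.simps e sum.delta) simp
  next
    case (Suc n)
    have "(\<Sum>u\<in>UNIV. Pn P pol n s u * D u) = (\<Sum>u\<in>UNIV. Pn P pol n s u * \<delta> u) + g * (\<Sum>u\<in>UNIV. \<Sum>w\<in>UNIV. Pn P pol n s u * ppol P pol u w * D w)"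
      by (subst eq) (simp add: distrib_left sum.distrib sum_distrib_left mult_ac)
    also have "(\<Sum>u\<in>UNIV. \<Sum>w\<in>UNIV. Pn P pol n s u * ppol P pol u w * D w) = (\<Sum>w\<in>UNIV. \<Sum>u\<in>UNIV. Pn P pol n s u * ppol P pol u w * D w)"
      by (rule swap_UNIV)
    also have "\<dots> = (\<Sum>w\<in>UNIV. Pn P pol (Suc n) s w * D w)"
      by (simp only: Pn.simps(2) sum_distrib_right)
    finally show ?case using Suc by (simp add: algebra_simps)
  qed
  define B where "B = (\<Sum>u\<in>UNIV. \<bar>D u\<bar>)"
  have Bb: "\<And>u. \<bar>D u\<bar> \<le> B" unfolding B_def by (rule member_le_sum) auto
  have "(\<lambda>n. g ^ n * (\<Sum>u\<in>UNIV. Pn P pol n s u * D u)) \<longlonglongrightarrow> 0"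
  proof (rule Lim_null_comparison)
    show "\<forall>\<^sub>F n in sequentially. norm (g ^ n * (\<Sum>u\<in>UNIV. Pn P pol n s u * D u)) \<le> g ^ n * B"
      using Pn_avg_bound[where f=D and B=B, OF p Bb] g0 by (intro always_eventually allI) (simp add: abs_mult mult_left_mono)
    show "(\<lambda>n. g ^ n * B) \<longlonglongrightarrow> 0"
      using g0 g1 by (intro tendsto_mult_left_zero LIMSEQ_power_zero) simp
  qed
  then have "(\<lambda>n. D s - g ^ n * (\<Sum>u\<in>UNIV. Pn P pol n s u * D u)) \<longlonglongrightarrow> D s - 0"
    by (intro tendsto_diff tendsto_const)
  moreover have "(\<lambda>n. D s - g ^ n * (\<Sum>u\<in>UNIV. Pn P pol n s u * D u)) = (\<lambda>n. \<Sum>t<n. g ^ t * (\<Sum>u\<in>UNIV. Pn P pol t s u * \<delta> u))"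
  proof (rule ext)
    fix n show "D s - g ^ n * (\<Sum>u\<in>UNIV. Pn P pol n s u * D u) = (\<Sum>t<n. g ^ t * (\<Sum>u\<in>UNIV. Pn P pol t s u * \<delta> u))"
      using part[of n] by linarith
  qed
  ultimately show ?thesis unfolding sums_def by simp
qed

definition Sv where "Sv pol s0 u = (\<Sum>t. g ^ t * Pn P pol t s0 u)"

lemma Sv_sums: "is_policy pol \<Longrightarrow> (\<lambda>t. g ^ t * Pn P pol t s0 u) sums Sv pol s0 u"
proof -
  assume p: "is_policy pol"
  have le1: "Pn P pol n s0 u \<le> 1" for n
  proof -
    have "Pn P pol n s0 u \<le> sum (Pn P pol n s0) UNIV" by (rule member_le_sum) (auto simp: Pn_nonneg[OF p])
    then show ?thesis using Pn_sum[OF p] by simp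
  qed
  have "summable (\<lambda>t. g ^ t * Pn P pol t s0 u)"
  proof (rule summable_comparison_test[OF _ summable_geometric[of g]])
    show "\<exists>N. \<forall>n\<ge>N. norm (g ^ n * Pn P pol n s0 u) \<le> g ^ n"
    proof (intro exI allI impI)
      fix n :: nat
      show "norm (g ^ n * Pn P pol n s0 u) \<le> g ^ n"
        using le1[of n] Pn_nonneg[OF p, of n s0 u] g0 by (simp add: abs_mult mult_left_le)
    qed
  next show "norm g < 1" using g0 g1 by simp
  qed
  then show ?thesis unfolding Sv_def by (rule summable_sums)
qed

lemma Sv_nonneg: "is_policy pol \<Longrightarrow> 0 \<le> Sv pol s0 u"
proof -
  assume p: "is_policy pol"
  have "summable (\<lambda>t. g ^ t * Pn P pol t s0 u)" using Sv_sums[OF p] by (rule sums_summable)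
  then show ?thesis unfolding Sv_def by (rule suminf_nonneg) (use g0 Pn_nonneg[OF p] in simp)
qed

lemma Sv_diag: "is_policy pol \<Longrightarrow> 1 \<le> Sv pol u u"
proof -
  assume p: "is_policy pol"
  have "sum (\<lambda>t. g ^ t * Pn P pol t u u) {0} \<le> (\<Sum>t. g ^ t * Pn P pol t u u)"
  proof (rule sum_le_suminf)
    show "summable (\<lambda>t. g ^ t * Pn P pol t u u)" using Sv_sums[OF p] by (rule sums_summable)
    show "0 \<le> g ^ m * Pn P pol m u u" for m using g0 Pn_nonneg[OF p] by simp
  qed simp
  then show ?thesis unfolding Sv_def by simp
qed

lemma Sv_sum: "is_policy pol \<Longrightarrow> (\<Sum>u\<in>UNIV. Sv pol s0 u) = 1 / (1 - g)"
proof -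
  assume p: "is_policy pol"
  have "(\<lambda>t. \<Sum>u\<in>UNIV. g ^ t * Pn P pol t s0 u) sums (\<Sum>u\<in>UNIV. Sv pol s0 u)"
    by (intro sums_sum Sv_sums p)
  moreover have "(\<lambda>t. \<Sum>u\<in>UNIV. g ^ t * Pn P pol t s0 u) = (\<lambda>t. g ^ t)"
    using Pn_sum[OF p] by (simp add: sum_distrib_left[symmetric])
  ultimately have "(\<lambda>t. g ^ t) sums (\<Sum>u\<in>UNIV. Sv pol s0 u)" by simp
  moreover have "(\<lambda>t. g ^ t) sums (1 / (1 - g))" using g0 g1 by (intro geometric_sums) simp
  ultimately show ?thesis using sums_unique2 by blast
qed

lemma dmu_Sv: "dmu P g pol \<mu> u = (1 - g) * (\<Sum>s0\<in>UNIV. \<mu> s0 * Sv pol s0 u)"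
  unfolding dmu_def Sv_def by (simp add: sum_distrib_left mult.left_commute)

lemma mu_diff:
  assumes p: "is_policy pol" and eq: "\<And>u. D u = \<delta> u + g * (\<Sum>w\<in>UNIV. ppol P pol u w * D w)"
  shows "(\<Sum>s0\<in>UNIV. \<mu> s0 * D s0) = (\<Sum>u\<in>UNIV. dmu P g pol \<mu> u * \<delta> u) / (1 - g)"
proof -
  have Ds: "D s0 = (\<Sum>u\<in>UNIV. \<delta> u * Sv pol s0 u)" for s0
  proof -
    have S1: "(\<lambda>t. \<Sum>u\<in>UNIV. \<delta> u * (g ^ t * Pn P pol t s0 u)) sums (\<Sum>u\<in>UNIV. \<delta> u * Sv pol s0 u)"
      by (intro sums_sum sums_mult Sv_sums p)
    have E: "(\<lambda>t. \<Sum>u\<in>UNIV. \<delta> u * (g ^ t * Pn P pol t s0 u)) = (\<lambda>t. g ^ t * (\<Sum>u\<in>UNIV. Pn P pol t s0 u * \<delta> u))"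
      by (intro ext) (simp add: sum_distrib_left mult.left_commute mult.commute)
    from S1 have "(\<lambda>t. g ^ t * (\<Sum>u\<in>UNIV. Pn P pol t s0 u * \<delta> u)) sums (\<Sum>u\<in>UNIV. \<delta> u * Sv pol s0 u)"
      by (simp only: E)
    then show ?thesis by (rule sums_unique2[OF expansion[OF p eq, of s0]])
  qed
  have "(\<Sum>s0\<in>UNIV. \<mu> s0 * D s0) = (\<Sum>s0\<in>UNIV. \<Sum>u\<in>UNIV. \<mu> s0 * (\<delta> u * Sv pol s0 u))"
    by (simp only: Ds sum_distrib_left)
  also have "\<dots> = (\<Sum>u\<in>UNIV. \<Sum>s0\<in>UNIV. \<mu> s0 * (\<delta> u * Sv pol s0 u))" by (rule swap_UNIV)
  also have "\<dots> = (\<Sum>u\<in>UNIV. \<delta> u * (\<Sum>s0\<in>UNIV. \<mu> s0 * Sv pol s0 u))"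
    by (intro sum.cong refl) (simp add: sum_distrib_left mult.left_commute)
  also have "\<dots> = (\<Sum>u\<in>UNIV. dmu P g pol \<mu> u * \<delta> u / (1 - g))"
    using g1 by (intro sum.cong refl) (simp add: dmu_Sv)
  also have "\<dots> = (\<Sum>u\<in>UNIV. dmu P g pol \<mu> u * \<delta> u) / (1 - g)"
    by (simp add: sum_divide_distrib)
  finally show ?thesis .
qed

lemma dmu_props:
  assumes p: "is_policy pol" and mn: "\<And>s. 0 \<le> \<mu> s" and ms: "(\<Sum>s\<in>UNIV. \<mu> s) = 1"
  shows "0 \<le> dmu P g pol \<mu> u" "(1 - g) * \<mu> u \<le> dmu P g pol \<mu> u" "(\<Sum>u\<in>UNIV. dmu P g pol \<mu> u) = 1"
proof -
  show "0 \<le> dmu P g pol \<mu> u" unfolding dmu_Sv using g1 mn Sv_nonneg[OF p]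
    by (intro mult_nonneg_nonneg sum_nonneg) auto
  have "\<mu> u * 1 \<le> \<mu> u * Sv pol u u" using mn Sv_diag[OF p] by (intro mult_left_mono) auto
  also have "\<dots> \<le> (\<Sum>s0\<in>UNIV. \<mu> s0 * Sv pol s0 u)"
    using mn Sv_nonneg[OF p] by (intro member_le_sum) auto
  finally show "(1 - g) * \<mu> u \<le> dmu P g pol \<mu> u" unfolding dmu_Sv using g1 by simp
  have "(\<Sum>u\<in>UNIV. dmu P g pol \<mu> u) = (1 - g) * (\<Sum>u\<in>UNIV. \<Sum>s0\<in>UNIV. \<mu> s0 * Sv pol s0 u)"
    unfolding dmu_Sv by (simp add: sum_distrib_left)
  also have "\<dots> = (1 - g) * (\<Sum>s0\<in>UNIV. \<Sum>u\<in>UNIV. \<mu> s0 * Sv pol s0 u)" by (subst swap_UNIV) (rule refl)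
  also have "\<dots> = (1 - g) * (\<Sum>s0\<in>UNIV. \<mu> s0 * (1 / (1 - g)))"
    by (simp add: sum_distrib_left[symmetric] Sv_sum[OF p])
  also have "\<dots> = 1" using g1 ms by (simp add: sum_divide_distrib[symmetric])
  finally show "(\<Sum>u\<in>UNIV. dmu P g pol \<mu> u) = 1" .
qed

end


lemma t_frac_mono:
  fixes s t :: real
  assumes "0 \<le> s" "s \<le> t"
  shows "s / (1 + s) \<le> t / (1 + t)"
proof -
  have a: "s / (1 + s) = 1 - 1 / (1 + s)" using assms by (simp add: field_simps)
  have b: "t / (1 + t) = 1 - 1 / (1 + t)" using assms by (simp add: field_simps)
  have "1 / (1 + t) \<le> 1 / (1 + s)" using assms by (intro divide_left_mono) auto
  then show ?thesis unfolding a b by simp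
qed

lemma lin_bound:
  fixes \<eta> A K c :: real
  assumes "c \<le> 1" "1 \<le> K" "A \<le> K" "0 < \<eta>"
  shows "c + \<eta> * A \<le> (1 + \<eta>) * K"
proof -
  have "\<eta> * A \<le> \<eta> * K" using assms by (intro mult_left_mono) auto
  moreover have "(1 + \<eta>) * K = K + \<eta> * K" by (simp add: distrib_right)
  ultimately show ?thesis using assms by linarith
qed

lemma scalar_pos:
  fixes p A K \<eta> y :: real
  assumes p: "0 < p" "p \<le> 1" and K: "1 \<le> K" and AK: "A \<le> K" and A0: "0 \<le> A" and eta: "0 < \<eta>"
    and y: "\<eta> * A \<le> y"
  shows "\<eta> * p * A\<^sup>2 / ((1 + \<eta>) * K) \<le> A * y / (1 + y)"
proof -
  have "\<eta> * A / (1 + \<eta> * A) \<le> y / (1 + y)"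
    using y A0 eta by (intro t_frac_mono) auto
  then have 1: "A * (\<eta> * A / (1 + \<eta> * A)) \<le> A * (y / (1 + y))" using A0 by (rule mult_left_mono)
  have "1 + \<eta> * A \<le> (1 + \<eta>) * K" using K AK eta by (intro lin_bound) auto
  then have 2: "\<eta> * A\<^sup>2 / ((1 + \<eta>) * K) \<le> \<eta> * A\<^sup>2 / (1 + \<eta> * A)"
    using eta A0 K by (intro divide_left_mono mult_pos_pos) (auto intro: add_pos_nonneg)
  have "p * A\<^sup>2 \<le> 1 * A\<^sup>2" using p by (intro mult_right_mono) auto
  then have "\<eta> * (p * A\<^sup>2) \<le> \<eta> * (1 * A\<^sup>2)" using eta by (intro mult_left_mono) auto
  then have "\<eta> * p * A\<^sup>2 \<le> \<eta> * A\<^sup>2" by (simp add: mult.assoc)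
  then have 3: "\<eta> * p * A\<^sup>2 / ((1 + \<eta>) * K) \<le> \<eta> * A\<^sup>2 / ((1 + \<eta>) * K)"
    using eta K by (intro divide_right_mono) auto
  have 4: "A * (\<eta> * A / (1 + \<eta> * A)) = \<eta> * A\<^sup>2 / (1 + \<eta> * A)" by (simp add: power2_eq_square)
  show ?thesis using 1 2 3 unfolding 4 by simp
qed


lemma scalar_neg:
  fixes p a K \<eta> y u :: real
  assumes p: "0 < p" "p \<le> 1" and K: "1 \<le> K" and aK: "a \<le> K" and a0: "0 < a" and eta: "0 < \<eta>"
    and u: "u = \<eta> * a / p" and y: "y = p * (1 - exp (- u))"
  shows "\<eta> * p * a\<^sup>2 / ((1 + \<eta>) * K) \<le> a * y / (1 - y)"
proof -
  have u0: "0 < u" using u p eta a0 by simp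
  have "1 + u \<le> exp u" by (rule exp_ge_add_one_self)
  then have e: "exp (- u) \<le> 1 / (1 + u)"
    using u0 by (simp add: exp_minus divide_simps)
  have ufrac: "u / (1 + u) = 1 - 1 / (1 + u)" using u0 by (simp add: field_simps)
  have y1: "u / (1 + u) \<le> 1 - exp (- u)" using e unfolding ufrac by simp
  have ey: "0 < exp (- u)" "exp (- u) < 1" using u0 by auto
  have y0: "0 \<le> y" using y p ey by simp
  have "y \<le> 1 * (1 - exp (- u))" unfolding y using p ey by (intro mult_right_mono) auto
  then have "y \<le> 1 - exp (- u)" by simp
  then have y1': "y < 1" using ey(1) by linarith
  have 5: "a * y \<le> a * y / (1 - y)"
  proof -
    have "a * y * (1 - y) \<le> a * y * 1" using a0 y0 y1' by (intro mult_left_mono) auto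
    then show ?thesis using y1' by (simp add: le_divide_eq)
  qed
  have pu: "\<eta> * a = p * u" using u p by simp
  have 6: "p * (u / (1 + u)) = \<eta> * a * p / (p + \<eta> * a)"
  proof -
    have "0 < p * u" using p u0 by simp
    then have "p + p * u \<noteq> 0" using p(1) by linarith
    then show ?thesis unfolding pu using p u0 by (simp add: field_simps)
  qed
  have 7: "p * (u / (1 + u)) \<le> y" using y1 p unfolding y by (intro mult_left_mono) auto
  have "p + \<eta> * a \<le> (1 + \<eta>) * K" using K aK eta p by (intro lin_bound) auto
  then have 8: "\<eta> * a * p / ((1 + \<eta>) * K) \<le> \<eta> * a * p / (p + \<eta> * a)"
    using eta a0 p K by (intro divide_left_mono mult_pos_pos) (auto intro: add_pos_pos)
  have "\<eta> * a * p / ((1 + \<eta>) * K) \<le> y" using 6 7 8 by linarith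
  then have "a * (\<eta> * a * p / ((1 + \<eta>) * K)) \<le> a * y" using a0 by (intro mult_left_mono) auto
  moreover have "a * (\<eta> * a * p / ((1 + \<eta>) * K)) = \<eta> * p * a\<^sup>2 / ((1 + \<eta>) * K)"
    by (simp add: power2_eq_square mult_ac)
  ultimately show ?thesis using 5 by linarith
qed



lemma scalar_main:
  fixes p A K \<eta> x :: real
  assumes p: "0 < p" "p \<le> 1" and K: "1 \<le> K" and AK: "\<bar>A\<bar> \<le> K" and eta: "0 < \<eta>"
    and x: "x = \<eta> * A / p"
  shows "\<eta> * p * A\<^sup>2 / ((1 + \<eta>) * K) \<le> p * (exp x - 1) * A / (1 - p + p * exp x)"
proof (cases "0 \<le> A")
  case True
  define y where "y = p * (exp x - 1)"
  have "1 + x \<le> exp x" by (rule exp_ge_add_one_self)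
  then have "x \<le> exp x - 1" by linarith
  then have "p * x \<le> y" unfolding y_def using p by (simp add: mult_left_mono)
  moreover have "p * x = \<eta> * A" using x p by simp
  ultimately have "\<eta> * A \<le> y" by simp
  then have c: "\<eta> * p * A\<^sup>2 / ((1 + \<eta>) * K) \<le> A * y / (1 + y)"
    using p K AK True eta by (intro scalar_pos) auto
  have Z: "1 - p + p * exp x = 1 + y" unfolding y_def by (simp add: algebra_simps)
  have N: "p * (exp x - 1) * A = A * y" unfolding y_def by simp
  show ?thesis unfolding Z N using c .
next
  case False
  define a where "a = - A"
  define u where "u = \<eta> * a / p"
  define y where "y = p * (1 - exp (- u))"
  have xu: "x = - u" unfolding x u_def a_def by simp
  have c: "\<eta> * p * a\<^sup>2 / ((1 + \<eta>) * K) \<le> a * y / (1 - y)"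
    by (rule scalar_neg[OF p K _ _ eta u_def y_def]) (use AK False in \<open>auto simp: a_def\<close>)
  have Z: "1 - p + p * exp x = 1 - y" unfolding y_def xu by (simp add: algebra_simps)
  have N: "p * (exp x - 1) * A = a * y" unfolding y_def xu a_def by (simp add: algebra_simps)
  have S: "a\<^sup>2 = A\<^sup>2" unfolding a_def by simp
  show ?thesis unfolding Z N using c unfolding S .
qed

lemma softmax_pos: "0 < softmax \<theta> s a"
  unfolding softmax_def by (intro divide_pos_pos sum_pos) auto

lemma softmax_sum: "(\<Sum>a\<in>UNIV. softmax \<theta> s a) = 1"
proof -
  have "0 < (\<Sum>a'\<in>UNIV. exp (\<theta> s a'))" by (intro sum_pos) auto
  then show ?thesis unfolding softmax_def by (simp add: sum_divide_distrib[symmetric])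
qed

lemma softmax_policy: "is_policy (softmax \<theta>)"
  unfolding is_policy_def by (simp add: softmax_sum less_imp_le[OF softmax_pos])

lemma det_policy_policy: "is_policy (det_policy astar)"
  unfolding is_policy_def det_policy_def by auto

lemma sum_bump:
  fixes f :: "'a::finite \<Rightarrow> real"
  shows "(\<Sum>b\<in>UNIV. f b * (if b = a then c else 1)) = (\<Sum>b\<in>UNIV. f b) + f a * (c - 1)"
proof -
  have "\<And>b. f b * (if b = a then c else 1) = f b + (if b = a then f a * (c - 1) else 0)"
    by (simp add: algebra_simps)
  then have "(\<Sum>b\<in>UNIV. f b * (if b = a then c else 1)) = (\<Sum>b\<in>UNIV. f b + (if b = a then f a * (c - 1) else 0))"
    by simp
  also have "\<dots> = (\<Sum>b\<in>UNIV. f b) + f a * (c - 1)" by (simp add: sum.distrib)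
  finally show ?thesis .
qed

lemma softmax_upd:
  "softmax (\<theta>(s := (\<theta> s)(a := \<theta> s a + x))) s' b =
    (if s' = s then softmax \<theta> s b * (if b = a then exp x else 1) / (1 - softmax \<theta> s a + softmax \<theta> s a * exp x)
     else softmax \<theta> s' b)"
proof (cases "s' = s")
  case False
  then show ?thesis unfolding softmax_def by simp
next
  case True
  define E where "E = (\<Sum>a'\<in>UNIV. exp (\<theta> s a'))"
  have E0: "0 < E" unfolding E_def by (intro sum_pos) auto
  have ex: "\<And>b. exp (((\<theta> s)(a := \<theta> s a + x)) b) = exp (\<theta> s b) * (if b = a then exp x else 1)"
    by (simp add: exp_add)
  have "(\<Sum>b\<in>UNIV. exp (((\<theta> s)(a := \<theta> s a + x)) b)) = E + exp (\<theta> s a) * (exp x - 1)"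
    unfolding ex sum_bump E_def ..
  then have L: "softmax (\<theta>(s := (\<theta> s)(a := \<theta> s a + x))) s b = exp (\<theta> s b) * (if b = a then exp x else 1) / (E + exp (\<theta> s a) * (exp x - 1))"
    unfolding softmax_def by (simp only: fun_upd_same ex)
  have R: "softmax \<theta> s b * (if b = a then exp x else 1) / (1 - softmax \<theta> s a + softmax \<theta> s a * exp x)
     = exp (\<theta> s b) / E * (if b = a then exp x else 1) / (1 - exp (\<theta> s a) / E + exp (\<theta> s a) / E * exp x)"
    unfolding softmax_def E_def ..
  have pos: "E + exp (\<theta> s a) * (exp x - 1) > 0"
  proof -
    have "exp (\<theta> s a) \<le> E" unfolding E_def by (rule member_le_sum) auto
    moreover have "E + exp (\<theta> s a) * (exp x - 1) = (E - exp (\<theta> s a)) + exp (\<theta> s a) * exp x"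
      by (simp add: algebra_simps)
    moreover have "0 < exp (\<theta> s a) * exp x" by simp
    ultimately show ?thesis by linarith
  qed
  have D: "1 - exp (\<theta> s a) / E + exp (\<theta> s a) / E * exp x = (E + exp (\<theta> s a) * (exp x - 1)) / E"
    using E0 by (simp add: field_simps)
  have G: "softmax (\<theta>(s := (\<theta> s)(a := \<theta> s a + x))) s b = softmax \<theta> s b * (if b = a then exp x else 1) / (1 - softmax \<theta> s a + softmax \<theta> s a * exp x)"
    unfolding L R D using E0 pos by (simp add: field_simps)
  show ?thesis using True G by simp
qed



context mdp
begin

lemma PV_bounds:
  assumes "is_policy pol"
  shows "0 \<le> (\<Sum>w\<in>UNIV. P s a w * V P r g pol w) \<and> (\<Sum>w\<in>UNIV. P s a w * V P r g pol w) \<le> 1 / (1 - g)"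
proof
  show "0 \<le> (\<Sum>w\<in>UNIV. P s a w * V P r g pol w)"
    using assms by (intro sum_nonneg mult_nonneg_nonneg P_nonneg V_nonneg)
  have "(\<Sum>w\<in>UNIV. P s a w * V P r g pol w) \<le> (\<Sum>w\<in>UNIV. P s a w * (1 / (1 - g)))"
    using assms by (intro sum_mono mult_left_mono P_nonneg V_le)
  also have "\<dots> = 1 / (1 - g)" by (simp add: sum_divide_distrib[symmetric] P_sum)
  finally show "(\<Sum>w\<in>UNIV. P s a w * V P r g pol w) \<le> 1 / (1 - g)" .
qed

lemma adv_bound:
  assumes "is_policy pol"
  shows "\<bar>Q P r g pol s a - V P r g pol s\<bar> \<le> 1 / (1 - g)"
proof -
  have pv: "0 \<le> (\<Sum>w\<in>UNIV. P s a w * V P r g pol w)" "(\<Sum>w\<in>UNIV. P s a w * V P r g pol w) \<le> 1 / (1 - g)"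
    using PV_bounds[OF assms] by auto
  have "g * (\<Sum>w\<in>UNIV. P s a w * V P r g pol w) \<le> g * (1 / (1 - g))" using pv g0 by (intro mult_left_mono) auto
  moreover have "0 \<le> g * (\<Sum>w\<in>UNIV. P s a w * V P r g pol w)" using pv g0 by simp
  moreover have "1 + g * (1 / (1 - g)) = 1 / (1 - g)" using g1 by (simp add: field_simps)
  moreover have "0 \<le> V P r g pol s" "V P r g pol s \<le> 1 / (1 - g)" using assms V_nonneg V_le by auto
  moreover have "0 \<le> r s a" "r s a \<le> 1" using r_range by auto
  ultimately show ?thesis unfolding Q_def by (simp add: abs_le_iff)
qed

lemma upd_delta:
  "(\<Sum>b\<in>UNIV. softmax (\<theta>(s := (\<theta> s)(a := \<theta> s a + x))) u b * Q P r g (softmax \<theta>) u b) - V P r g (softmax \<theta>) u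
    = (if u = s then softmax \<theta> s a * (exp x - 1) * (Q P r g (softmax \<theta>) s a - V P r g (softmax \<theta>) s)
         / (1 - softmax \<theta> s a + softmax \<theta> s a * exp x) else 0)"
proof (cases "u = s")
  case False
  then have "softmax (\<theta>(s := (\<theta> s)(a := \<theta> s a + x))) u = softmax \<theta> u"
    by (intro ext) (simp add: softmax_upd)
  then show ?thesis using False Qavg_self[OF softmax_policy] by simp
next
  case True
  define \<pi> where "\<pi> = softmax \<theta>"
  define \<pi>' where "\<pi>' = softmax (\<theta>(s := (\<theta> s)(a := \<theta> s a + x)))"
  define Z where "Z = 1 - \<pi> s a + \<pi> s a * exp x"
  define A where "A = (\<lambda>b. Q P r g \<pi> s b - V P r g \<pi> s)"
  have pi': "\<pi>' s b = \<pi> s b * (if b = a then exp x else 1) / Z" for b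
    unfolding \<pi>'_def \<pi>_def Z_def by (simp add: softmax_upd)
  have "(\<Sum>b\<in>UNIV. \<pi>' s b * Q P r g \<pi> s b) - V P r g \<pi> s = (\<Sum>b\<in>UNIV. \<pi>' s b * A b)"
    unfolding A_def \<pi>'_def by (simp add: right_diff_distrib sum_subtractf sum_distrib_right[symmetric] softmax_sum)
  also have "\<dots> = (\<Sum>b\<in>UNIV. (\<pi> s b * A b) * (if b = a then exp x else 1)) / Z"
    unfolding pi' sum_divide_distrib by (intro sum.cong refl) (simp add: mult_ac)
  also have "\<dots> = ((\<Sum>b\<in>UNIV. \<pi> s b * A b) + \<pi> s a * A a * (exp x - 1)) / Z"
    by (simp only: sum_bump)
  also have "(\<Sum>b\<in>UNIV. \<pi> s b * A b) = 0"
    unfolding A_def \<pi>_def using Qavg_self[OF softmax_policy, of \<theta> s]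
    by (simp add: right_diff_distrib sum_subtractf sum_distrib_right[symmetric] softmax_sum)
  finally show ?thesis using True unfolding \<pi>'_def \<pi>_def Z_def A_def by (simp add: mult_ac)
qed

lemma upd_improve:
  fixes \<theta> s a \<eta> x
  assumes eta: "0 < \<eta>"
    and x: "x = \<eta> * (Q P r g (softmax \<theta>) s a - V P r g (softmax \<theta>) s) / softmax \<theta> s a"
  defines "\<pi>' \<equiv> softmax (\<theta>(s := (\<theta> s)(a := \<theta> s a + x)))"
  defines "\<delta>s \<equiv> softmax \<theta> s a * (exp x - 1) * (Q P r g (softmax \<theta>) s a - V P r g (softmax \<theta>) s)
         / (1 - softmax \<theta> s a + softmax \<theta> s a * exp x)"
  shows "\<eta> * (1 - g) * softmax \<theta> s a * (Q P r g (softmax \<theta>) s a - V P r g (softmax \<theta>) s)\<^sup>2 / (1 + \<eta>) \<le> \<delta>s"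
    and "\<And>u. 0 \<le> V P r g \<pi>' u - V P r g (softmax \<theta>) u"
    and "\<And>u. (if u = s then \<delta>s else 0) \<le> V P r g \<pi>' u - V P r g (softmax \<theta>) u"
proof -
  define A where "A = Q P r g (softmax \<theta>) s a - V P r g (softmax \<theta>) s"
  define p where "p = softmax \<theta> s a"
  have "softmax \<theta> s a \<le> sum (softmax \<theta> s) UNIV"
    by (rule member_le_sum) (auto intro: less_imp_le softmax_pos)
  then have "softmax \<theta> s a \<le> 1" using softmax_sum[of \<theta> s] by linarith
  then have p: "0 < p" "p \<le> 1" unfolding p_def using softmax_pos[of \<theta> s a] by auto
  have K: "1 \<le> 1 / (1 - g)" using g0 g1 by simp
  have "\<eta> * p * A\<^sup>2 / ((1 + \<eta>) * (1 / (1 - g))) \<le> p * (exp x - 1) * A / (1 - p + p * exp x)"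
    by (rule scalar_main[OF p K _ eta]) (use adv_bound[OF softmax_policy] x in \<open>auto simp: A_def p_def\<close>)
  moreover have "\<eta> * p * A\<^sup>2 / ((1 + \<eta>) * (1 / (1 - g))) = \<eta> * (1 - g) * p * A\<^sup>2 / (1 + \<eta>)"
    using g1 by (simp add: field_simps)
  ultimately show b1: "\<eta> * (1 - g) * softmax \<theta> s a * (Q P r g (softmax \<theta>) s a - V P r g (softmax \<theta>) s)\<^sup>2 / (1 + \<eta>) \<le> \<delta>s"
    unfolding \<delta>s_def A_def p_def by (simp add: mult_ac)
  have "0 \<le> \<eta> * (1 - g) * softmax \<theta> s a * (Q P r g (softmax \<theta>) s a - V P r g (softmax \<theta>) s)\<^sup>2 / (1 + \<eta>)"
    using eta g1 softmax_pos[of \<theta> s a] by (intro divide_nonneg_pos mult_nonneg_nonneg) auto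
  with b1 have d0: "0 \<le> \<delta>s" by linarith
  define D where "D = (\<lambda>u. V P r g \<pi>' u - V P r g (softmax \<theta>) u)"
  have pp: "is_policy \<pi>'" unfolding \<pi>'_def by (rule softmax_policy)
  have eq: "D u = (if u = s then \<delta>s else 0) + g * (\<Sum>w\<in>UNIV. ppol P \<pi>' u w * D w)" for u
    unfolding D_def using diff_eq[OF softmax_policy[of \<theta>] pp, of u] upd_delta[of \<theta> s a x u]
    unfolding \<pi>'_def \<delta>s_def by simp
  have Dn: "0 \<le> D u" for u
    by (rule nonneg_fix[OF pp eq]) (use d0 in auto)
  then show "\<And>u. 0 \<le> V P r g \<pi>' u - V P r g (softmax \<theta>) u" unfolding D_def by simp
  fix u
  have "0 \<le> g * (\<Sum>w\<in>UNIV. ppol P \<pi>' u w * D w)"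
    using g0 Dn ppol_nonneg[OF pp] by (intro mult_nonneg_nonneg sum_nonneg) auto
  then show "(if u = s then \<delta>s else 0) \<le> V P r g \<pi>' u - V P r g (softmax \<theta>) u"
    using eq[of u] unfolding D_def by linarith
qed

end


lemma weighted_cs:
  fixes w f :: "'s::finite \<Rightarrow> real"
  assumes w0: "\<And>s. 0 \<le> w s" and w1: "(\<Sum>s\<in>UNIV. w s) = 1"
  shows "(\<Sum>s\<in>UNIV. w s * f s)\<^sup>2 \<le> (\<Sum>s\<in>UNIV. w s * (f s)\<^sup>2)"
proof -
  define m where "m = (\<Sum>s\<in>UNIV. w s * f s)"
  have "0 \<le> (\<Sum>s\<in>UNIV. w s * (f s - m)\<^sup>2)" using w0 by (intro sum_nonneg mult_nonneg_nonneg) auto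
  also have "(\<Sum>s\<in>UNIV. w s * (f s - m)\<^sup>2) = (\<Sum>s\<in>UNIV. w s * (f s)\<^sup>2 - 2 * m * (w s * f s) + m\<^sup>2 * w s)"
    by (intro sum.cong refl) (simp add: power2_eq_square algebra_simps)
  also have "\<dots> = (\<Sum>s\<in>UNIV. w s * (f s)\<^sup>2) - 2 * m * m + m\<^sup>2 * 1"
    unfolding sum.distrib sum_subtractf sum_distrib_left[symmetric] w1 m_def ..
  finally show ?thesis unfolding m_def by (simp add: power2_eq_square)
qed

context mdp
begin

lemma vmu_gain:
  assumes eta: "0 < \<eta>" and mn: "\<And>s. 0 \<le> \<mu> s"
  shows "\<mu> s * (\<eta> * (1 - g) * softmax \<theta> s a * (Q P r g (softmax \<theta>) s a - V P r g (softmax \<theta>) s)\<^sup>2 / (1 + \<eta>))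
     \<le> Vmu P r g (softmax (npg_update P r g \<eta> \<theta> s a)) \<mu> - Vmu P r g (softmax \<theta>) \<mu>"
proof -
  define x where "x = \<eta> * (Q P r g (softmax \<theta>) s a - V P r g (softmax \<theta>) s) / softmax \<theta> s a"
  have up: "npg_update P r g \<eta> \<theta> s a = \<theta>(s := (\<theta> s)(a := \<theta> s a + x))"
    unfolding npg_update_def x_def ..
  note I = upd_improve[OF eta x_def]
  define \<pi>' where "\<pi>' = softmax (\<theta>(s := (\<theta> s)(a := \<theta> s a + x)))"
  define D where "D = (\<lambda>u. V P r g \<pi>' u - V P r g (softmax \<theta>) u)"
  have Dn: "0 \<le> D u" for u unfolding D_def \<pi>'_def by (rule I(2))
  have "Vmu P r g (softmax (npg_update P r g \<eta> \<theta> s a)) \<mu> - Vmu P r g (softmax \<theta>) \<mu> = (\<Sum>u\<in>UNIV. \<mu> u * D u)"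
    unfolding Vmu_def up D_def \<pi>'_def by (simp add: right_diff_distrib sum_subtractf)
  moreover have "\<mu> s * D s \<le> (\<Sum>u\<in>UNIV. \<mu> u * D u)"
    by (rule member_le_sum) (use mn Dn in auto)
  moreover have "\<eta> * (1 - g) * softmax \<theta> s a * (Q P r g (softmax \<theta>) s a - V P r g (softmax \<theta>) s)\<^sup>2 / (1 + \<eta>) \<le> D s"
    using I(1) I(3)[of s] unfolding D_def \<pi>'_def by simp
  then have "\<mu> s * (\<eta> * (1 - g) * softmax \<theta> s a * (Q P r g (softmax \<theta>) s a - V P r g (softmax \<theta>) s)\<^sup>2 / (1 + \<eta>)) \<le> \<mu> s * D s"
    using mn by (rule mult_left_mono) 
  ultimately show ?thesis by linarith
qed

end


context mdp
begin

lemma expected_gain: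
  fixes \<theta> :: "'s \<Rightarrow> 'a \<Rightarrow> real" and \<mu> :: "'s \<Rightarrow> real" and astar :: "'s \<Rightarrow> 'a"
  assumes eta: "0 < \<eta>" and mn: "\<And>s. 0 \<le> \<mu> s" and ms: "(\<Sum>s\<in>UNIV. \<mu> s) = 1"
    and mm: "Min (range \<mu>) > 0"
  shows "(\<Sum>s\<in>UNIV. \<Sum>a\<in>UNIV. dmu P g (softmax \<theta>) \<mu> s * softmax \<theta> s a *
          Vmu P r g (softmax (npg_update P r g \<eta> \<theta> s a)) \<mu>)
       - Vmu P r g (softmax \<theta>) \<mu>
     \<ge> \<eta> * (1 - g) ^ 4 * Min (range \<mu>) / (1 + \<eta>)
        * (1 / Max (range (\<lambda>s. dmu P g (det_policy astar) \<mu> s / \<mu> s)))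
        * (Min (range (\<lambda>s. softmax \<theta> s (astar s))))\<^sup>2 / real CARD('s)
        * (Vmu P r g (det_policy astar) \<mu> - Vmu P r g (softmax \<theta>) \<mu>)\<^sup>2"
proof -
  define \<pi> where "\<pi> = softmax \<theta>"
  define d where "d = dmu P g \<pi> \<mu>"
  define ds where "ds = dmu P g (det_policy astar) \<mu>"
  define A where "A = (\<lambda>s a. Q P r g \<pi> s a - V P r g \<pi> s)"
  define c where "c = \<eta> * (1 - g) / (1 + \<eta>)"
  define m\<mu> where "m\<mu> = Min (range \<mu>)"
  define m\<pi> where "m\<pi> = Min (range (\<lambda>s. softmax \<theta> s (astar s)))"
  define M where "M = Max (range (\<lambda>s. dmu P g (det_policy astar) \<mu> s / \<mu> s))"
  define G where "G = Vmu P r g (det_policy astar) \<mu> - Vmu P r g (softmax \<theta>) \<mu>"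
  define Vn where "Vn = (\<lambda>s a. Vmu P r g (softmax (npg_update P r g \<eta> \<theta> s a)) \<mu>)"
  have pp: "is_policy \<pi>" unfolding \<pi>_def by (rule softmax_policy)
  have pd: "is_policy (det_policy astar)" by (rule det_policy_policy)
  have c0: "0 \<le> c" unfolding c_def using eta g1 by simp
  have mu_ge: "m\<mu> \<le> \<mu> s" for s unfolding m\<mu>_def by (rule Min_le) auto
  have mmu: "0 < m\<mu>" using mm unfolding m\<mu>_def .
  have mu_pos: "0 < \<mu> s" for s using mu_ge[of s] mm unfolding m\<mu>_def by linarith
  have pi_pos: "0 < \<pi> s a" for s a unfolding \<pi>_def by (rule softmax_pos)
  have mpi_ge: "m\<pi> \<le> \<pi> s (astar s)" for s unfolding m\<pi>_def \<pi>_def by (rule Min_le) auto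
  have mpi_pos: "0 < m\<pi>"
  proof -
    have "m\<pi> \<in> range (\<lambda>s. softmax \<theta> s (astar s))" unfolding m\<pi>_def by (rule Min_in) auto
    then show ?thesis using softmax_pos by auto
  qed
  have d0: "0 \<le> d s" for s unfolding d_def by (rule dmu_props(1)[OF pp mn ms])
  have dge: "(1 - g) * \<mu> s \<le> d s" for s unfolding d_def by (rule dmu_props(2)[OF pp mn ms])
  have dsum: "(\<Sum>s\<in>UNIV. d s) = 1" unfolding d_def by (rule dmu_props(3)[OF pp mn ms])
  have ds0: "0 \<le> ds s" for s unfolding ds_def by (rule dmu_props(1)[OF pd mn ms])
  have dsge: "(1 - g) * \<mu> s \<le> ds s" for s unfolding ds_def by (rule dmu_props(2)[OF pd mn ms])
  have dssum: "(\<Sum>s\<in>UNIV. ds s) = 1" unfolding ds_def by (rule dmu_props(3)[OF pd mn ms])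
  have M_ge: "ds s / \<mu> s \<le> M" for s unfolding M_def ds_def by (rule Max_ge) auto
  have M_pos: "0 < M"
  proof -
    have "(1 - g) * \<mu> s / \<mu> s \<le> ds s / \<mu> s" for s using dsge[of s] mu_pos[of s] by (intro divide_right_mono) auto
    then have "1 - g \<le> M" using M_ge[of undefined] mu_pos[of undefined] by (metis nonzero_mult_div_cancel_right order.trans less_irrefl)
    then show ?thesis using g1 by linarith
  qed
  have ds_le: "ds s \<le> M * \<mu> s" for s using M_ge[of s] mu_pos[of s] by (simp add: divide_le_eq)
  have dpi0: "0 \<le> d s * \<pi> s a" for s a using d0[of s] pi_pos[of s a] by simp
  have gain: "\<mu> s * (c * \<pi> s a * (A s a)\<^sup>2) \<le> Vn s a - Vmu P r g \<pi> \<mu>" for s a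
    using vmu_gain[where s=s and a=a and \<theta>=\<theta> and \<mu>=\<mu>, OF eta mn] unfolding Vn_def \<pi>_def A_def c_def by (simp add: mult_ac)
  have "(\<Sum>s\<in>UNIV. \<Sum>a\<in>UNIV. d s * \<pi> s a * Vn s a) - Vmu P r g \<pi> \<mu>
      = (\<Sum>s\<in>UNIV. \<Sum>a\<in>UNIV. d s * \<pi> s a * (Vn s a - Vmu P r g \<pi> \<mu>))"
  proof -
    have "(\<Sum>s\<in>UNIV. \<Sum>a\<in>UNIV. d s * \<pi> s a) = 1"
      using dsum softmax_sum[of \<theta>] unfolding \<pi>_def by (simp add: sum_distrib_left[symmetric])
    then show ?thesis
      by (simp add: right_diff_distrib sum_subtractf sum_distrib_right[symmetric])
  qed
  also have "\<dots> \<ge> (\<Sum>s\<in>UNIV. \<Sum>a\<in>UNIV. d s * \<pi> s a * (\<mu> s * (c * \<pi> s a * (A s a)\<^sup>2)))"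
    using gain dpi0 by (intro sum_mono mult_left_mono) auto
  finally have L1: "(\<Sum>s\<in>UNIV. \<Sum>a\<in>UNIV. d s * \<pi> s a * (\<mu> s * (c * \<pi> s a * (A s a)\<^sup>2)))
      \<le> (\<Sum>s\<in>UNIV. \<Sum>a\<in>UNIV. d s * \<pi> s a * Vn s a) - Vmu P r g \<pi> \<mu>" .
  have L2: "(\<Sum>s\<in>UNIV. d s * \<pi> s (astar s) * (\<mu> s * (c * \<pi> s (astar s) * (A s (astar s))\<^sup>2)))
      \<le> (\<Sum>s\<in>UNIV. \<Sum>a\<in>UNIV. d s * \<pi> s a * (\<mu> s * (c * \<pi> s a * (A s a)\<^sup>2)))"
  proof (intro sum_mono member_le_sum)
    fix s x
    have "0 \<le> \<mu> s * (c * \<pi> s x * (A s x)\<^sup>2)"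
      using mn[of s] c0 pi_pos[of s x] by (intro mult_nonneg_nonneg) auto
    then show "0 \<le> d s * \<pi> s x * (\<mu> s * (c * \<pi> s x * (A s x)\<^sup>2))"
      using dpi0[of s x] by (rule mult_nonneg_nonneg[rotated])
  qed auto
  have L3: "(\<Sum>s\<in>UNIV. ((1 - g) * m\<mu>) * m\<pi> * (\<mu> s * (c * m\<pi> * (A s (astar s))\<^sup>2)))
      \<le> (\<Sum>s\<in>UNIV. d s * \<pi> s (astar s) * (\<mu> s * (c * \<pi> s (astar s) * (A s (astar s))\<^sup>2)))"
  proof (intro sum_mono)
    fix s
    have a1: "(1 - g) * m\<mu> \<le> d s"
    proof -
      have "(1 - g) * m\<mu> \<le> (1 - g) * \<mu> s" using mu_ge[of s] g1 by (intro mult_left_mono) auto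
      then show ?thesis using dge[of s] by linarith
    qed
    have a0: "0 \<le> (1 - g) * m\<mu>" using g1 mmu by simp
    have b: "(1 - g) * m\<mu> * m\<pi> \<le> d s * \<pi> s (astar s)"
      by (rule mult_mono[OF a1 mpi_ge[of s] d0[of s]]) (use mpi_pos in simp)
    have e: "c * m\<pi> * (A s (astar s))\<^sup>2 \<le> c * \<pi> s (astar s) * (A s (astar s))\<^sup>2"
      by (rule mult_right_mono[OF mult_left_mono[OF mpi_ge[of s] c0]]) simp
    then have e': "\<mu> s * (c * m\<pi> * (A s (astar s))\<^sup>2) \<le> \<mu> s * (c * \<pi> s (astar s) * (A s (astar s))\<^sup>2)"
      using mn[of s] by (rule mult_left_mono)
    have f0: "0 \<le> \<mu> s * (c * m\<pi> * (A s (astar s))\<^sup>2)" using mn[of s] c0 mpi_pos by simp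
    show "(1 - g) * m\<mu> * m\<pi> * (\<mu> s * (c * m\<pi> * (A s (astar s))\<^sup>2))
        \<le> d s * \<pi> s (astar s) * (\<mu> s * (c * \<pi> s (astar s) * (A s (astar s))\<^sup>2))"
      by (rule mult_mono[OF b e' _ f0]) (use d0[of s] pi_pos[of s "astar s"] in simp)
  qed
  have L3': "(\<Sum>s\<in>UNIV. ((1 - g) * m\<mu>) * m\<pi> * (\<mu> s * (c * m\<pi> * (A s (astar s))\<^sup>2)))
      = (1 - g) * m\<mu> * m\<pi>\<^sup>2 * c * (\<Sum>s\<in>UNIV. \<mu> s * (A s (astar s))\<^sup>2)"
    by (simp add: sum_distrib_left power2_eq_square mult_ac)
  \<comment> \<open>step 4: performance difference\<close>
  have dstar: "(\<Sum>b\<in>UNIV. det_policy astar u b * Q P r g \<pi> u b) - V P r g \<pi> u = A u (astar u)" for u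
  proof -
    have "(\<Sum>b\<in>UNIV. det_policy astar u b * Q P r g \<pi> u b) = (\<Sum>b\<in>UNIV. if b = astar u then Q P r g \<pi> u b else 0)"
      unfolding det_policy_def by (intro sum.cong refl) simp
    then show ?thesis unfolding A_def by simp
  qed
  have Geq: "G = (\<Sum>u\<in>UNIV. ds u * A u (astar u)) / (1 - g)"
  proof -
    have eqD: "V P r g (det_policy astar) u - V P r g \<pi> u = A u (astar u)
       + g * (\<Sum>w\<in>UNIV. ppol P (det_policy astar) u w * (V P r g (det_policy astar) w - V P r g \<pi> w))" for u
      using diff_eq[OF pp pd, of u] unfolding dstar[of u] .
    have "(\<Sum>s0\<in>UNIV. \<mu> s0 * (V P r g (det_policy astar) s0 - V P r g \<pi> s0))
        = (\<Sum>u\<in>UNIV. ds u * A u (astar u)) / (1 - g)"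
      unfolding ds_def
      by (rule mu_diff[OF pd, where D = "\<lambda>u. V P r g (det_policy astar) u - V P r g \<pi> u"
            and \<delta> = "\<lambda>u. A u (astar u)" and \<mu> = \<mu>, OF eqD])
    moreover have "G = (\<Sum>s0\<in>UNIV. \<mu> s0 * (V P r g (det_policy astar) s0 - V P r g \<pi> s0))"
      unfolding G_def Vmu_def \<pi>_def by (simp only: right_diff_distrib sum_subtractf)
    ultimately show ?thesis by simp
  qed
  have CS: "(\<Sum>u\<in>UNIV. ds u * A u (astar u))\<^sup>2 \<le> (\<Sum>u\<in>UNIV. ds u * (A u (astar u))\<^sup>2)"
    by (rule weighted_cs[OF ds0 dssum])
  have DM: "(\<Sum>u\<in>UNIV. ds u * (A u (astar u))\<^sup>2) \<le> M * (\<Sum>u\<in>UNIV. \<mu> u * (A u (astar u))\<^sup>2)"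
    unfolding sum_distrib_left
  proof (rule sum_mono)
    fix u
    have "ds u * (A u (astar u))\<^sup>2 \<le> (M * \<mu> u) * (A u (astar u))\<^sup>2"
      by (rule mult_right_mono[OF ds_le]) simp
    then show "ds u * (A u (astar u))\<^sup>2 \<le> M * (\<mu> u * (A u (astar u))\<^sup>2)" by (simp only: mult.assoc)
  qed
  have G2: "((1 - g) * G)\<^sup>2 = (\<Sum>u\<in>UNIV. ds u * A u (astar u))\<^sup>2"
    unfolding Geq using g1 by simp
  have "(1 - g)\<^sup>2 * G\<^sup>2 \<le> (\<Sum>u\<in>UNIV. \<mu> u * (A u (astar u))\<^sup>2) * M"
    using CS DM unfolding G2[symmetric] power_mult_distrib by (simp only: mult.commute)
  then have Sb: "(1 - g)\<^sup>2 * G\<^sup>2 / M \<le> (\<Sum>u\<in>UNIV. \<mu> u * (A u (astar u))\<^sup>2)"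
    using M_pos by (simp add: pos_divide_le_eq)
  define X where "X = \<eta> * (1 - g) ^ 4 * m\<mu> / (1 + \<eta>) * (1 / M) * m\<pi>\<^sup>2 * G\<^sup>2"
  have X0: "0 \<le> X" unfolding X_def using eta g1 mmu M_pos by simp
  have XL: "X = (1 - g) * m\<mu> * m\<pi>\<^sup>2 * c * ((1 - g)\<^sup>2 * G\<^sup>2 / M)"
    unfolding X_def c_def using M_pos eta by (simp add: power4_eq_xxxx power2_eq_square field_simps)
  have K0: "0 \<le> (1 - g) * m\<mu> * m\<pi>\<^sup>2 * c" using g1 mmu c0 by simp
  have "X \<le> (1 - g) * m\<mu> * m\<pi>\<^sup>2 * c * (\<Sum>s\<in>UNIV. \<mu> s * (A s (astar s))\<^sup>2)"
    unfolding XL using K0 Sb by (rule mult_left_mono[rotated])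
  also have "\<dots> \<le> (\<Sum>s\<in>UNIV. \<Sum>a\<in>UNIV. d s * \<pi> s a * Vn s a) - Vmu P r g \<pi> \<mu>"
    using L1 L2 L3 L3' by linarith
  finally have XLe: "X \<le> (\<Sum>s\<in>UNIV. \<Sum>a\<in>UNIV. d s * \<pi> s a * Vn s a) - Vmu P r g \<pi> \<mu>" .
  have "X / real CARD('s) \<le> X"
  proof -
    have "0 < CARD('s)" by simp
    then have n1: "1 \<le> real CARD('s)" by linarith
    have "X * 1 \<le> X * real CARD('s)" using X0 n1 by (rule mult_left_mono[rotated])
    then show ?thesis using n1 by (simp add: divide_le_eq)
  qed
  moreover have "\<eta> * (1 - g) ^ 4 * Min (range \<mu>) / (1 + \<eta>)
        * (1 / Max (range (\<lambda>s. dmu P g (det_policy astar) \<mu> s / \<mu> s)))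
        * (Min (range (\<lambda>s. softmax \<theta> s (astar s))))\<^sup>2 / real CARD('s)
        * (Vmu P r g (det_policy astar) \<mu> - Vmu P r g (softmax \<theta>) \<mu>)\<^sup>2 = X / real CARD('s)"
    unfolding X_def m\<mu>_def M_def m\<pi>_def G_def by simp
  ultimately show ?thesis using XLe unfolding d_def \<pi>_def Vn_def by linarith
qed

end

theorem lemma3:
  fixes P :: "'s::finite \<Rightarrow> 'a::finite \<Rightarrow> 's \<Rightarrow> real"
    and r :: "'s \<Rightarrow> 'a \<Rightarrow> real"
    and g :: real and \<eta> :: real
    and \<mu> :: "'s \<Rightarrow> real"
    and astar :: "'s \<Rightarrow> 'a"
    and \<theta> :: "nat \<Rightarrow> 's \<Rightarrow> 'a \<Rightarrow> real"
    and st :: "nat \<Rightarrow> 's" and act :: "nat \<Rightarrow> 'a"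
  assumes r_range: "\<And>s a. 0 \<le> r s a \<and> r s a \<le> 1"
    and P_nonneg: "\<And>s a s'. 0 \<le> P s a s'"
    and P_sum: "\<And>s a. (\<Sum>s'\<in>UNIV. P s a s') = 1"
    and g_range: "0 \<le> g" "g < 1"
    and mu_nonneg: "\<And>s. 0 \<le> \<mu> s"
    and mu_sum: "(\<Sum>s\<in>UNIV. \<mu> s) = 1"
    and mu_min: "Min (range \<mu>) > 0"
    and eta_pos: "\<eta> > 0"
    and optimal: "\<And>pol s. is_policy pol \<Longrightarrow> V P r g pol s \<le> V P r g (det_policy astar) s"
    and step: "\<And>t. t \<ge> 1 \<Longrightarrow> \<theta> (Suc t) = npg_update P r g \<eta> (\<theta> t) (st t) (act t)"
    and sample_support: "\<And>t. t \<ge> 1 \<Longrightarrow>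
          dmu P g (softmax (\<theta> t)) \<mu> (st t) > 0 \<and> softmax (\<theta> t) (st t) (act t) > 0"
  shows "\<forall>t\<ge>1.
     (\<forall>s0. V P r g (softmax (\<theta> (Suc t))) s0 - V P r g (softmax (\<theta> t)) s0 \<ge> 0) \<and>
     (\<Sum>s\<in>UNIV. \<Sum>a\<in>UNIV. dmu P g (softmax (\<theta> t)) \<mu> s * softmax (\<theta> t) s a *
          Vmu P r g (softmax (npg_update P r g \<eta> (\<theta> t) s a)) \<mu>)
       - Vmu P r g (softmax (\<theta> t)) \<mu>
     \<ge> \<eta> * (1 - g) ^ 4 * Min (range \<mu>) / (1 + \<eta>)
        * (1 / Max (range (\<lambda>s. dmu P g (det_policy astar) \<mu> s / \<mu> s)))
        * (Min (range (\<lambda>s. softmax (\<theta> t) s (astar s))))\<^sup>2 / real CARD('s)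
        * (Vmu P r g (det_policy astar) \<mu> - Vmu P r g (softmax (\<theta> t)) \<mu>)\<^sup>2"
proof -
  interpret M: mdp P r g by unfold_locales (use r_range P_nonneg P_sum g_range in auto)
  have part1: "0 \<le> V P r g (softmax (\<theta> (Suc t))) s0 - V P r g (softmax (\<theta> t)) s0" if t: "1 \<le> t" for t s0
  proof -
    define x where "x = \<eta> * (Q P r g (softmax (\<theta> t)) (st t) (act t) - V P r g (softmax (\<theta> t)) (st t)) / softmax (\<theta> t) (st t) (act t)"
    have "\<theta> (Suc t) = (\<theta> t)(st t := (\<theta> t (st t))(act t := \<theta> t (st t) (act t) + x))"
      using step[OF t] unfolding npg_update_def x_def by simp
    then show ?thesis using M.upd_improve(2)[OF eta_pos x_def] by simp
  qed
  have part2: "(\<Sum>s\<in>UNIV. \<Sum>a\<in>UNIV. dmu P g (softmax (\<theta> t)) \<mu> s * softmax (\<theta> t) s a *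
          Vmu P r g (softmax (npg_update P r g \<eta> (\<theta> t) s a)) \<mu>)
       - Vmu P r g (softmax (\<theta> t)) \<mu>
     \<ge> \<eta> * (1 - g) ^ 4 * Min (range \<mu>) / (1 + \<eta>)
        * (1 / Max (range (\<lambda>s. dmu P g (det_policy astar) \<mu> s / \<mu> s)))
        * (Min (range (\<lambda>s. softmax (\<theta> t) s (astar s))))\<^sup>2 / real CARD('s)
        * (Vmu P r g (det_policy astar) \<mu> - Vmu P r g (softmax (\<theta> t)) \<mu>)\<^sup>2" for t
    by (rule M.expected_gain[OF eta_pos mu_nonneg mu_sum mu_min])
  show ?thesis using part1 part2 by blast
qed

end
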